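(* Let $\alpha\in\{0,1\}$ and $u\geqslant1$ be integers. There exists a set $\mathfrak{A}$ of $u$ integer $3\times3$ matrices such that the multiset of absolute values of all entries of all matrices in $\mathfrak{A}$ is exactly the set $$\begin{aligned}&[4\alpha+9,2u+4\alpha+7]_2\cup[2u+4\alpha+8,3u+4\alpha+7]\cup[3u+8\alpha+16,5u+8\alpha+15]\cup[5u+12\alpha+24,6u+12\alpha+23]\\ &\cup[6u+12\alpha+25,8u+12\alpha+23]_2\cup[9u+16\alpha+32,10u+16\alpha+31]\cup[11u+20\alpha+40,12u+20\alpha+39]\\&\cup[14u+28\alpha+56,16u+28\alpha+54]_2\end{aligned}$$ (each element occurring once), and $\sigma_r(A)=\sigma_c(A)=(0,0,0)$ for every $A\in\mathfrak{A}$.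
   Context: For integers $a\equiv b\pmod d$ with $d\geqslant1$, $[a,b]_d=\{a+id: 0\leqslant i\leqslant (b-a)/d\}$ if $a\leqslant b$ and $[a,b]_d=\varnothing$ if $a>b$; $[a,b]=[a,b]_1$. For a matrix $A$, $\sigma_r(A)$ is the sequence of its row sums and $\sigma_c(A)$ the sequence of its column sums. *)

theory Defs
  imports "HOL-Analysis.Analysis" "HOL-Library.Multiset" "HOL-Library.Numeral_Type"
begin

definition iv_step :: "int \<Rightarrow> int \<Rightarrow> int \<Rightarrow> int set" where
  "iv_step d a b = (if a \<le> b then {a + i * d | i. 0 \<le> i \<and> i \<le> (b - a) div d} else {})"

definition abs_entries :: "int ^ 3 ^ 3 \<Rightarrow> int multiset" where
  "abs_entries A = image_mset (\<lambda>(i, j). \<bar>A $ i $ j\<bar>) (mset_set (UNIV :: (3 \<times> 3) set))"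

definition row_sums :: "int ^ 3 ^ 3 \<Rightarrow> int ^ 3" where
  "row_sums A = (\<chi> i. \<Sum>j\<in>UNIV. A $ i $ j)"

definition col_sums :: "int ^ 3 ^ 3 \<Rightarrow> int ^ 3" where
  "col_sums A = (\<chi> j. \<Sum>i\<in>UNIV. A $ i $ j)"

end

theory Submission
  imports Defs
begin

lemma iv1: "iv_step 1 a b = {a..b}"
proof -
  have "x \<in> {a + i * 1 |i. 0 \<le> i \<and> i \<le> (b - a) div 1}" if "x \<in> {a..b}" for x
    using that by (intro CollectI exI[of _ "x - a"]) auto
  then show ?thesis unfolding iv_step_def by auto
qed

lemma iv2: assumes "b = a + (n-1)*2" "n \<ge> 1"
  shows "iv_step 2 a b = (\<lambda>k. a + k*2) ` {0..n-1}"
  using assms unfolding iv_step_def by auto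

lemma img_plus: "(\<lambda>k::int. p + k) ` {0..m} = {p..p+m}"
proof -
  have "x \<in> (\<lambda>k::int. p + k) ` {0..m}" if "x \<in> {p..p+m}" for x
    using that by (intro image_eqI[of _ _ "x - p"]) auto
  then show ?thesis by auto
qed

lemma img_minus: "(\<lambda>k::int. q - k) ` {0..m} = {q-m..q}"
proof -
  have "x \<in> (\<lambda>k::int. q - k) ` {0..m}" if "x \<in> {q-m..q}" for x
    using that by (intro image_eqI[of _ _ "q - x"]) auto
  then show ?thesis by auto
qed

lemma sum_single: "finite A \<Longrightarrow> inj_on f A \<Longrightarrow> (\<Sum>x\<in>A. {#f x#}) = mset_set (f ` A)"
proof (induction A rule: finite_induct)
  case empty then show ?case by simp
next
  case (insert x F)
  then have "f x \<notin> f ` F" by auto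
  with insert show ?case by auto
qed

definition M :: "int \<Rightarrow> int \<Rightarrow> int \<Rightarrow> int^3^3" where
  "M c u k = (let a = c+1+2*k; b = 3*u+c-1-k; d = 5*u+2*c-1-k; e = 6*u+3*c+1+2*k in
    vector [vector [a, b, -(a+b)], vector [d, e, -(d+e)], vector [-(a+d), -(b+e), a+b+d+e]])"

lemma abs_M:
  assumes "c \<ge> 8" "0 \<le> k" "k \<le> u - 1"
  shows "abs_entries (M c u k) =
    {#c+1+2*k#} + {#3*u+c-1-k#} + {#3*u+2*c+k#} + {#5*u+2*c-1-k#} + {#6*u+3*c+1+2*k#}
    + {#11*u+5*c+k#} + {#5*u+3*c+k#} + {#9*u+4*c+k#} + {#14*u+7*c+2*k#}"
proof -
  have U: "(UNIV :: (3 \<times> 3) set) = {1,2,3} \<times> {1,2,3}"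
    by (simp add: UNIV_3 flip: UNIV_Times_UNIV)
  show ?thesis
    using assms unfolding abs_entries_def U M_def Let_def
    by (simp add: abs_if algebra_simps)
qed

lemma rc_M: "row_sums (M c u k) = 0 \<and> col_sums (M c u k) = 0"
  unfolding row_sums_def col_sums_def M_def Let_def
  by (simp add: vec_eq_iff forall_3 sum_3)

lemma imgm: assumes "\<And>k. f k = q - k" "lo = q - m" shows "f ` {0..m} = {lo..(q::int)}"
proof -
  have "f = (\<lambda>k. q - k)" using assms(1) by auto
  then show ?thesis using img_minus assms(2) by simp
qed

lemma imgp: assumes "\<And>k. f k = p + k" "hi = p + m" shows "f ` {0..m} = {(p::int)..hi}"
proof -
  have "f = (\<lambda>k. p + k)" using assms(1) by auto
  then show ?thesis using img_plus assms(2) by simp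
qed

lemma img2: assumes "\<And>k. f k = a + k*2" "b = a + (n-1)*2" "n \<ge> 1"
  shows "iv_step 2 a b = f ` {0..n-1}"
proof -
  have "f = (\<lambda>k. a + k*2)" using assms(1) by auto
  then show ?thesis using iv2[OF assms(2,3)] by simp
qed

lemma main:
  fixes c u :: int
  assumes c: "c \<ge> 8" and u: "u \<ge> 1"
  shows "\<exists>\<AA> :: (int ^ 3 ^ 3) set. finite \<AA> \<and> int (card \<AA>) = u \<and>
    (\<Sum>A\<in>\<AA>. abs_entries A) = mset_set
      (iv_step 2 (c+1) (2*u+c-1) \<union> iv_step 1 (2*u+c) (3*u+c-1)
       \<union> iv_step 1 (3*u+2*c) (5*u+2*c-1) \<union> iv_step 1 (5*u+3*c) (6*u+3*c-1)
       \<union> iv_step 2 (6*u+3*c+1) (8*u+3*c-1) \<union> iv_step 1 (9*u+4*c) (10*u+4*c-1)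
       \<union> iv_step 1 (11*u+5*c) (12*u+5*c-1)
       \<union> iv_step 2 (14*u+7*c) (16*u+7*c-2)) \<and>
    (\<forall>A\<in>\<AA>. row_sums A = 0 \<and> col_sums A = 0)"
proof -
  define K where "K = {0..u-1}"
  have inj: "inj_on (M c u) K"
  proof
    fix x y assume "M c u x = M c u y"
    then have "M c u x $ 1 $ 1 = M c u y $ 1 $ 1" by simp
    then show "x = y" unfolding M_def Let_def by simp
  qed
  have fK: "finite K" unfolding K_def by simp
  have cardK: "int (card (M c u ` K)) = u"
    using card_image[OF inj] u unfolding K_def by simp
  define f1 where "f1 = (\<lambda>k::int. c+1+2*k)"
  define f2 where "f2 = (\<lambda>k::int. 3*u+c-1-k)"
  define f3 where "f3 = (\<lambda>k::int. 3*u+2*c+k)"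
  define f4 where "f4 = (\<lambda>k::int. 5*u+2*c-1-k)"
  define f5 where "f5 = (\<lambda>k::int. 6*u+3*c+1+2*k)"
  define f6 where "f6 = (\<lambda>k::int. 11*u+5*c+k)"
  define f7 where "f7 = (\<lambda>k::int. 5*u+3*c+k)"
  define f8 where "f8 = (\<lambda>k::int. 9*u+4*c+k)"
  define f9 where "f9 = (\<lambda>k::int. 14*u+7*c+2*k)"
  have injs: "inj_on f1 K" "inj_on f2 K" "inj_on f3 K" "inj_on f4 K" "inj_on f5 K"
    "inj_on f6 K" "inj_on f7 K" "inj_on f8 K" "inj_on f9 K"
    unfolding f1_def f2_def f3_def f4_def f5_def f6_def f7_def f8_def f9_def inj_on_def by auto
  have "(\<Sum>A\<in>M c u ` K. abs_entries A) = (\<Sum>k\<in>K. abs_entries (M c u k))"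
    using sum.reindex[OF inj, of abs_entries] by (simp add: comp_def)
  also have "\<dots> = (\<Sum>k\<in>K. {#f1 k#} + {#f2 k#} + {#f3 k#} + {#f4 k#} + {#f5 k#}
    + {#f6 k#} + {#f7 k#} + {#f8 k#} + {#f9 k#})"
    by (rule sum.cong[OF refl], unfold f1_def f2_def f3_def f4_def f5_def f6_def f7_def f8_def f9_def,
        rule abs_M) (use c in \<open>auto simp: K_def\<close>)
  also have "\<dots> = mset_set (f1 ` K) + mset_set (f2 ` K) + mset_set (f3 ` K) + mset_set (f4 ` K)
     + mset_set (f5 ` K) + mset_set (f6 ` K) + mset_set (f7 ` K) + mset_set (f8 ` K) + mset_set (f9 ` K)"
    by (simp only: sum.distrib sum_single[OF fK injs(1)] sum_single[OF fK injs(2)]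
       sum_single[OF fK injs(3)] sum_single[OF fK injs(4)] sum_single[OF fK injs(5)]
       sum_single[OF fK injs(6)] sum_single[OF fK injs(7)] sum_single[OF fK injs(8)]
       sum_single[OF fK injs(9)])
  finally have L: "(\<Sum>A\<in>M c u ` K. abs_entries A) = \<dots>" .
  have e1: "iv_step 2 (c+1) (2*u+c-1) = f1 ` K" unfolding K_def
    by (rule img2) (use u in \<open>auto simp: f1_def\<close>)
  have e5: "iv_step 2 (6*u+3*c+1) (8*u+3*c-1) = f5 ` K" unfolding K_def
    by (rule img2) (use u in \<open>auto simp: f5_def\<close>)
  have e9: "iv_step 2 (14*u+7*c) (16*u+7*c-2) = f9 ` K" unfolding K_def
    by (rule img2) (use u in \<open>auto simp: f9_def\<close>)
  have e2: "f2 ` K = {2*u+c..3*u+c-1}" unfolding K_def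
    by (rule imgm) (auto simp: f2_def)
  have e4: "f4 ` K = {4*u+2*c..5*u+2*c-1}" unfolding K_def
    by (rule imgm) (auto simp: f4_def)
  have e3: "f3 ` K = {3*u+2*c..4*u+2*c-1}" unfolding K_def
    by (rule imgp) (auto simp: f3_def)
  have e6: "f6 ` K = {11*u+5*c..12*u+5*c-1}" unfolding K_def
    by (rule imgp) (auto simp: f6_def)
  have e7: "f7 ` K = {5*u+3*c..6*u+3*c-1}" unfolding K_def
    by (rule imgp) (auto simp: f7_def)
  have e8: "f8 ` K = {9*u+4*c..10*u+4*c-1}" unfolding K_def
    by (rule imgp) (auto simp: f8_def)
  have e34: "{3*u+2*c..5*u+2*c-1} = f3 ` K \<union> f4 ` K"
    unfolding e3 e4 using u by auto
  have R: "iv_step 2 (c+1) (2*u+c-1) \<union> iv_step 1 (2*u+c) (3*u+c-1)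
       \<union> iv_step 1 (3*u+2*c) (5*u+2*c-1) \<union> iv_step 1 (5*u+3*c) (6*u+3*c-1)
       \<union> iv_step 2 (6*u+3*c+1) (8*u+3*c-1) \<union> iv_step 1 (9*u+4*c) (10*u+4*c-1)
       \<union> iv_step 1 (11*u+5*c) (12*u+5*c-1)
       \<union> iv_step 2 (14*u+7*c) (16*u+7*c-2)
     = f1 ` K \<union> f2 ` K \<union> (f3 ` K \<union> f4 ` K) \<union> f7 ` K \<union> f5 ` K \<union> f8 ` K \<union> f6 ` K \<union> f9 ` K"
    unfolding iv1 e1 e5 e9 e34 e2 e7 e8 e6 ..
  have "mset_set (f1 ` K \<union> f2 ` K \<union> (f3 ` K \<union> f4 ` K) \<union> f7 ` K \<union> f5 ` K \<union> f8 ` K \<union> f6 ` K \<union> f9 ` K)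
    = mset_set (f1 ` K) + mset_set (f2 ` K) + (mset_set (f3 ` K) + mset_set (f4 ` K)) + mset_set (f7 ` K)
     + mset_set (f5 ` K) + mset_set (f8 ` K) + mset_set (f6 ` K) + mset_set (f9 ` K)"
    using c u
    apply (subst mset_set_Union; (simp add: fK)?; (auto simp: K_def f1_def f2_def f3_def f4_def f5_def f6_def f7_def f8_def f9_def)?)+
    done
  then have "(\<Sum>A\<in>M c u ` K. abs_entries A) = mset_set (iv_step 2 (c+1) (2*u+c-1) \<union> iv_step 1 (2*u+c) (3*u+c-1)
       \<union> iv_step 1 (3*u+2*c) (5*u+2*c-1) \<union> iv_step 1 (5*u+3*c) (6*u+3*c-1)
       \<union> iv_step 2 (6*u+3*c+1) (8*u+3*c-1) \<union> iv_step 1 (9*u+4*c) (10*u+4*c-1)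
       \<union> iv_step 1 (11*u+5*c) (12*u+5*c-1)
       \<union> iv_step 2 (14*u+7*c) (16*u+7*c-2))"
    unfolding R L by (simp add: ac_simps)
  then show ?thesis using fK cardK rc_M by blast
qed

theorem lemma2p3:
  fixes \<alpha> u :: int
  assumes "\<alpha> \<in> {0, 1}" and "u \<ge> 1"
  shows "\<exists>\<AA> :: (int ^ 3 ^ 3) set. finite \<AA> \<and> int (card \<AA>) = u \<and>
    (\<Sum>A\<in>\<AA>. abs_entries A) = mset_set
      (iv_step 2 (4*\<alpha>+9) (2*u+4*\<alpha>+7) \<union> iv_step 1 (2*u+4*\<alpha>+8) (3*u+4*\<alpha>+7)
       \<union> iv_step 1 (3*u+8*\<alpha>+16) (5*u+8*\<alpha>+15) \<union> iv_step 1 (5*u+12*\<alpha>+24) (6*u+12*\<alpha>+23)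
       \<union> iv_step 2 (6*u+12*\<alpha>+25) (8*u+12*\<alpha>+23) \<union> iv_step 1 (9*u+16*\<alpha>+32) (10*u+16*\<alpha>+31)
       \<union> iv_step 1 (11*u+20*\<alpha>+40) (12*u+20*\<alpha>+39)
       \<union> iv_step 2 (14*u+28*\<alpha>+56) (16*u+28*\<alpha>+54)) \<and>
    (\<forall>A\<in>\<AA>. row_sums A = 0 \<and> col_sums A = 0)"
proof -
  have c: "4*\<alpha>+8 \<ge> 8" using assms(1) by auto
  have e: "4*\<alpha>+8+1 = 4*\<alpha>+9" "2*u+(4*\<alpha>+8)-1 = 2*u+4*\<alpha>+7"
    "2*u+(4*\<alpha>+8) = 2*u+4*\<alpha>+8" "3*u+(4*\<alpha>+8)-1 = 3*u+4*\<alpha>+7"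
    "3*u+2*(4*\<alpha>+8) = 3*u+8*\<alpha>+16" "5*u+2*(4*\<alpha>+8)-1 = 5*u+8*\<alpha>+15"
    "5*u+3*(4*\<alpha>+8) = 5*u+12*\<alpha>+24" "6*u+3*(4*\<alpha>+8)-1 = 6*u+12*\<alpha>+23"
    "6*u+3*(4*\<alpha>+8)+1 = 6*u+12*\<alpha>+25" "8*u+3*(4*\<alpha>+8)-1 = 8*u+12*\<alpha>+23"
    "9*u+4*(4*\<alpha>+8) = 9*u+16*\<alpha>+32" "10*u+4*(4*\<alpha>+8)-1 = 10*u+16*\<alpha>+31"
    "11*u+5*(4*\<alpha>+8) = 11*u+20*\<alpha>+40" "12*u+5*(4*\<alpha>+8)-1 = 12*u+20*\<alpha>+39"
    "14*u+7*(4*\<alpha>+8) = 14*u+28*\<alpha>+56" "16*u+7*(4*\<alpha>+8)-2 = 16*u+28*\<alpha>+54"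
    by simp_all
  show ?thesis unfolding e[symmetric] by (rule main[OF c assms(2)])
qed

end
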